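(* Let $n\ge 2$ and let $\eta_1,\dots,\eta_n$ be real numbers with $\eta_1+\cdots+\eta_n=0$ and $\eta_1^2+\cdots+\eta_n^2=1$. Let $r_{ij}\geq 0$ be nonnegative real numbers for $1\le i<j\le n$. Then \[ \sum_{i<j}(\eta_i-\eta_j)^2 r_{ij}\leq \sum_{i<j}r_{ij}+\max_{i<j} r_{ij}. \] *)

theory Defs
  imports Main "HOL.Real"
begin

end

theory Submission
  imports Defs
begin

lemma key_ineq:
  fixes a b x y :: real
  assumes "x > 0" "y > 0"
  shows "(a-b)^2 \<le> (x+y)*(a^2/x + b^2/y)"
proof -
  have "(x+y)*(a^2/x + b^2/y) - (a-b)^2 = (a*y+b*x)^2/(x*y)"
    using assms by (simp add: field_simps power2_eq_square)
  moreover have "(a*y+b*x)^2/(x*y) \<ge> 0" using assms by simp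
  ultimately show ?thesis by linarith
qed

lemma inner_sum:
  fixes g :: "nat \<Rightarrow> real"
  assumes "a \<in> {1..n}" "b \<in> {1..n}" "a \<noteq> b"
  shows "(\<Sum>k\<in>{1..n}. if a = k \<or> b = k then g k else 0) = g a + g b"
proof -
  have "(\<Sum>k\<in>{1..n}. if a = k \<or> b = k then g k else 0)
      = (\<Sum>k\<in>{1..n}. (if a = k then g k else 0) + (if b = k then g k else 0))"
    by (rule sum.cong) (use assms in auto)
  also have "\<dots> = g a + g b" using assms by (simp add: sum.distrib)
  finally show ?thesis .
qed

theorem mainTheorem4:
  fixes n :: nat and eta :: "nat \<Rightarrow> real" and r :: "nat \<Rightarrow> nat \<Rightarrow> real"
  assumes "n \<ge> 2"
    and "(\<Sum>i=1..n. eta i) = 0"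
    and "(\<Sum>i=1..n. (eta i)^2) = 1"
    and "\<And>i j. 1 \<le> i \<Longrightarrow> i < j \<Longrightarrow> j \<le> n \<Longrightarrow> r i j \<ge> 0"
  shows "(\<Sum>(i,j)\<in>{(i,j). 1 \<le> i \<and> i < j \<and> j \<le> n}. (eta i - eta j)^2 * r i j)
         \<le> (\<Sum>(i,j)\<in>{(i,j). 1 \<le> i \<and> i < j \<and> j \<le> n}. r i j)
           + Max ((\<lambda>(i,j). r i j) ` {(i,j). 1 \<le> i \<and> i < j \<and> j \<le> n})"
proof -
  define P where "P = {(i,j). 1 \<le> i \<and> i < j \<and> j \<le> n}"
  have finP: "finite P"
    by (rule finite_subset[of _ "{1..n}\<times>{1..n}"]) (auto simp: P_def)
  have P12: "(1,2) \<in> P" using assms(1) by (simp add: P_def)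
  have r0: "\<And>p. p \<in> P \<Longrightarrow> r (fst p) (snd p) \<ge> 0"
    using assms(4) by (auto simp: P_def)
  define W where "W = (\<Sum>p\<in>P. r (fst p) (snd p))"
  define M where "M = Max ((\<lambda>(i,j). r i j) ` P)"
  have Weq: "(\<Sum>(i,j)\<in>P. r i j) = W" unfolding W_def by (simp add: case_prod_beta)
  have W0: "W \<ge> 0" unfolding W_def using r0 by (simp add: sum_nonneg)
  have rM: "\<And>p. p \<in> P \<Longrightarrow> r (fst p) (snd p) \<le> M"
    unfolding M_def by (rule Max_ge) (use finP in \<open>auto simp: case_prod_beta\<close>)
  have M0: "M \<ge> 0" using rM[OF P12] r0[OF P12] by simp
  define d where "d k = (\<Sum>p\<in>{p\<in>P. fst p = k \<or> snd p = k}. r (fst p) (snd p))" for k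
  have d0: "d k \<ge> 0" for k unfolding d_def using r0 by (auto intro!: sum_nonneg)
  have rd: "r (fst p) (snd p) \<le> d (fst p)" "r (fst p) (snd p) \<le> d (snd p)" if "p \<in> P" for p
    unfolding d_def using that finP r0
    by (auto intro!: member_le_sum)
  have dW: "d (fst p) + d (snd p) \<le> W + r (fst p) (snd p)" if pP: "p \<in> P" for p
  proof -
    define A where "A = {q\<in>P. fst q = fst p \<or> snd q = fst p}"
    define B where "B = {q\<in>P. fst q = snd p \<or> snd q = snd p}"
    have AB: "A \<inter> B = {p}" using pP by (auto simp: A_def B_def P_def)
    have fA: "finite A" "finite B" using finP by (auto simp: A_def B_def)
    have "d (fst p) + d (snd p) = (\<Sum>q\<in>A. r (fst q) (snd q)) + (\<Sum>q\<in>B. r (fst q) (snd q))"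
      by (simp add: d_def A_def B_def)
    also have "\<dots> = (\<Sum>q\<in>A \<union> B. r (fst q) (snd q)) + (\<Sum>q\<in>A \<inter> B. r (fst q) (snd q))"
      using sum.union_inter[OF fA, of "\<lambda>q. r (fst q) (snd q)"] by simp
    also have "(\<Sum>q\<in>A \<union> B. r (fst q) (snd q)) \<le> W"
      unfolding W_def by (rule sum_mono2) (use finP r0 in \<open>auto simp: A_def B_def\<close>)
    finally show ?thesis using AB by simp
  qed
  define f where "f k = eta k ^2 / d k" for k
  have f0: "f k \<ge> 0" for k using d0[of k] by (simp add: f_def)
  have step1: "(eta (fst p) - eta (snd p))^2 * r (fst p) (snd p)
      \<le> (W+M) * (r (fst p) (snd p) * (f (fst p) + f (snd p)))" if pP: "p \<in> P" for p
  proof (cases "r (fst p) (snd p) = 0")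
    case True then show ?thesis by simp
  next
    case False
    hence rp: "r (fst p) (snd p) > 0" using r0[OF pP] by simp
    have "d (fst p) > 0" "d (snd p) > 0" using rd[OF pP] rp by linarith+
    hence "(eta (fst p) - eta (snd p))^2 \<le> (d (fst p) + d (snd p)) * (f (fst p) + f (snd p))"
      unfolding f_def by (rule key_ineq)
    also have "\<dots> \<le> (W+M) * (f (fst p) + f (snd p))"
      using dW[OF pP] rM[OF pP] f0[of "fst p"] f0[of "snd p"]
      by (intro mult_right_mono) auto
    finally show ?thesis using rp
      by (metis mult.commute mult.left_commute mult_right_mono order_less_imp_le)
  qed
  have step2: "(\<Sum>p\<in>P. r (fst p) (snd p) * (f (fst p) + f (snd p))) = (\<Sum>k\<in>{1..n}. f k * d k)"
  proof -
    have "(\<Sum>k\<in>{1..n}. f k * d k)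
        = (\<Sum>k\<in>{1..n}. \<Sum>p\<in>P. if fst p = k \<or> snd p = k then f k * r (fst p) (snd p) else 0)"
      unfolding d_def by (simp add: sum_distrib_left sum.inter_filter[OF finP] if_distrib cong: if_cong)
    also have "\<dots> = (\<Sum>p\<in>P. \<Sum>k\<in>{1..n}. if fst p = k \<or> snd p = k then f k * r (fst p) (snd p) else 0)"
      by (rule sum.swap)
    also have "\<dots> = (\<Sum>p\<in>P. r (fst p) (snd p) * (f (fst p) + f (snd p)))"
    proof (rule sum.cong[OF refl])
      fix p assume "p \<in> P"
      hence "fst p \<in> {1..n}" "snd p \<in> {1..n}" "fst p \<noteq> snd p" by (auto simp: P_def)
      from inner_sum[OF this, of "\<lambda>k. f k * r (fst p) (snd p)"]
      show "(\<Sum>k\<in>{1..n}. if fst p = k \<or> snd p = k then f k * r (fst p) (snd p) else 0)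
          = r (fst p) (snd p) * (f (fst p) + f (snd p))" by (simp add: algebra_simps)
    qed
    finally show ?thesis by simp
  qed
  have step3: "(\<Sum>k\<in>{1..n}. f k * d k) \<le> 1"
  proof -
    have "(\<Sum>k\<in>{1..n}. f k * d k) \<le> (\<Sum>k\<in>{1..n}. eta k ^2)"
      by (rule sum_mono) (auto simp: f_def)
    thus ?thesis using assms(3) by simp
  qed
  have "(\<Sum>(i,j)\<in>P. (eta i - eta j)^2 * r i j)
      = (\<Sum>p\<in>P. (eta (fst p) - eta (snd p))^2 * r (fst p) (snd p))"
    by (simp add: case_prod_beta)
  also have "\<dots> \<le> (\<Sum>p\<in>P. (W+M) * (r (fst p) (snd p) * (f (fst p) + f (snd p))))"
    by (rule sum_mono) (rule step1)
  also have "\<dots> = (W+M) * (\<Sum>k\<in>{1..n}. f k * d k)"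
    by (simp add: sum_distrib_left[symmetric] step2)
  also have "\<dots> \<le> (W+M) * 1"
    using step3 W0 M0 by (intro mult_left_mono) auto
  finally show ?thesis using Weq unfolding P_def M_def by simp
qed

end
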